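(* The assignment $\max:\underline{\mathrm{IN}}\to\underline{\mathrm{G}}$ sending an interval domain $(D,\mathrm{left},\mathrm{right})$ to $(\max(D),\le)$ and an arrow $f:D\to E$ to its restriction $f|_{\max(D)}:\max(D)\to\max(E)$ is a functor.
   Context: Order notions: directed/filtered sets, suprema $\bigsqcup$, infima $\bigwedge$, the way-below relation $x\ll y$ (for every directed $S$ with a supremum, $y\sqsubseteq\bigsqcup S$ implies $x\sqsubseteq s$ for some $s\in S$), $\Uparrow x=\{a:x\ll a\}$, $\Downarrow x=\{a:a\ll x\}$; a poset is continuous if some subset $B$ has $B\cap\Downarrow x$ containing a directed set with supremum $x$ for every $x$; a continuous dcpo additionally has suprema of all directed sets; $\max(D)$ is the set of maximal elements; the Scott topology consists of upper sets $U$ with $\bigsqcup S\in U\Rightarrow S\cap U\neq\emptyset$ for directed $S$. A continuous poset is bicontinuous if (1) $x\ll y$ iff for every filtered $S$ with an infimum, $\bigwedge S\sqsubseteq x$ implies $s\sqsubseteq y$ for some $s\in S$, and (2) each $\Uparrow x$ is filtered with infimum $x$; its interval topology has basis $\{z: a\ll z\ll b\}$. A globally hyperbolic poset is a bicontinuous poset $(X,\le)$ whose closed intervals $[a,b]=\{z:a\le z\le b\}$ are compact in the interval topology. $\underline{\mathrm{G}}$ is the category whose objects are globally hyperbolic posets and whose arrows are monotone maps continuous for the interval topologies. An interval poset is a poset $D$ with maps $\mathrm{left},\mathrm{right}:D\to\max(D)$ such that (writing $\sqcap$ for binary infimum, assumed to exist only where named) $x=\mathrm{left}(x)\sqcap\mathrm{right}(x)$;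 if $\mathrm{right}(x)=\mathrm{left}(y)$ then $\mathrm{left}(x\sqcap y)=\mathrm{left}(x)$, $\mathrm{right}(x\sqcap y)=\mathrm{right}(y)$; and for $p\in\max(D)$ with $x\sqsubseteq p$, $\mathrm{left}(\mathrm{left}(x)\sqcap p)=\mathrm{left}(x)$, $\mathrm{right}(\mathrm{left}(x)\sqcap p)=p$, $\mathrm{left}(p\sqcap\mathrm{right}(x))=p$, $\mathrm{right}(p\sqcap\mathrm{right}(x))=\mathrm{right}(x)$. Define $a\le b$ on $\max(D)$ iff $a=\mathrm{left}(z),b=\mathrm{right}(z)$ for some $z$; let $[p,\cdot]=\mathrm{left}^{-1}(p)$, $[\cdot,q]=\mathrm{right}^{-1}(q)$. An interval domain is an interval poset with $D$ a continuous dcpo such that: (i) if $p\in\Uparrow x\cap\max(D)$ then $\Uparrow(\mathrm{left}(x)\sqcap p)$ and $\Uparrow(p\sqcap\mathrm{right}(x))$ are nonempty; (ii) for each $x$, TFAE: $\Uparrow x\neq\emptyset$; for all $y\in[\mathrm{left}(x),\cdot]$ with $y\sqsubseteq x$, $y\ll\mathrm{right}(y)$ in the subposet $[\cdot,\mathrm{right}(y)]$; for all $y\in[\cdot,\mathrm{right}(x)]$ with $y\sqsubseteq x$, $y\ll\mathrm{left}(y)$ in the subposet $[\mathrm{left}(y),\cdot]$; (iii) for directed $S\subseteq[p,\cdot]$, $\mathrm{left}(\bigsqcup S)=p$ and $\mathrm{right}(\bigsqcup S)=\mathrm{right}(\bigsqcup T)$ for every directed $T\subseteq[q,\cdot]$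 with $\mathrm{right}(T)=\mathrm{right}(S)$, and dually for directed $S\subseteq[\cdot,q]$, $\mathrm{right}(\bigsqcup S)=q$ and $\mathrm{left}(\bigsqcup S)=\mathrm{left}(\bigsqcup T)$ for every directed $T\subseteq[\cdot,p]$ with $\mathrm{left}(T)=\mathrm{left}(S)$; (iv) each $\{y\in\max(D):x\sqsubseteq y\}$ is Scott compact. $\underline{\mathrm{IN}}$ is the category of interval domains with arrows the Scott continuous maps $f:D\to E$ satisfying $f\circ\mathrm{left}_D=\mathrm{left}_E\circ f$ and $f\circ\mathrm{right}_D=\mathrm{right}_E\circ f$. *)

theory Defs
  imports "HOL-Analysis.Analysis"
begin

text \<open>All posets are given by a carrier set X and a relation le (read only on X).\<close>

definition poset :: "'a set \<Rightarrow> ('a \<Rightarrow> 'a \<Rightarrow> bool) \<Rightarrow> bool" where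
  "poset X le \<longleftrightarrow> (\<forall>x\<in>X. le x x) \<and> (\<forall>x\<in>X. \<forall>y\<in>X. le x y \<and> le y x \<longrightarrow> x = y)
     \<and> (\<forall>x\<in>X. \<forall>y\<in>X. \<forall>z\<in>X. le x y \<and> le y z \<longrightarrow> le x z)"

definition directed :: "'a set \<Rightarrow> ('a \<Rightarrow> 'a \<Rightarrow> bool) \<Rightarrow> 'a set \<Rightarrow> bool" where
  "directed X le S \<longleftrightarrow> S \<subseteq> X \<and> S \<noteq> {} \<and> (\<forall>a\<in>S. \<forall>b\<in>S. \<exists>c\<in>S. le a c \<and> le b c)"

definition filtered :: "'a set \<Rightarrow> ('a \<Rightarrow> 'a \<Rightarrow> bool) \<Rightarrow> 'a set \<Rightarrow> bool" where
  "filtered X le S \<longleftrightarrow> S \<subseteq> X \<and> S \<noteq> {} \<and> (\<forall>a\<in>S. \<forall>b\<in>S. \<exists>c\<in>S. le c a \<and> le c b)"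

definition is_sup :: "'a set \<Rightarrow> ('a \<Rightarrow> 'a \<Rightarrow> bool) \<Rightarrow> 'a set \<Rightarrow> 'a \<Rightarrow> bool" where
  "is_sup X le S s \<longleftrightarrow> s \<in> X \<and> (\<forall>a\<in>S. le a s) \<and> (\<forall>u\<in>X. (\<forall>a\<in>S. le a u) \<longrightarrow> le s u)"

definition is_inf :: "'a set \<Rightarrow> ('a \<Rightarrow> 'a \<Rightarrow> bool) \<Rightarrow> 'a set \<Rightarrow> 'a \<Rightarrow> bool" where
  "is_inf X le S s \<longleftrightarrow> s \<in> X \<and> (\<forall>a\<in>S. le s a) \<and> (\<forall>u\<in>X. (\<forall>a\<in>S. le u a) \<longrightarrow> le u s)"

definition way_below :: "'a set \<Rightarrow> ('a \<Rightarrow> 'a \<Rightarrow> bool) \<Rightarrow> 'a \<Rightarrow> 'a \<Rightarrow> bool" where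
  "way_below X le x y \<longleftrightarrow> x \<in> X \<and> y \<in> X \<and>
     (\<forall>S s. directed X le S \<and> is_sup X le S s \<and> le y s \<longrightarrow> (\<exists>a\<in>S. le x a))"

definition wwup :: "'a set \<Rightarrow> ('a \<Rightarrow> 'a \<Rightarrow> bool) \<Rightarrow> 'a \<Rightarrow> 'a set" where
  "wwup X le x = {a\<in>X. way_below X le x a}"

definition wwdown :: "'a set \<Rightarrow> ('a \<Rightarrow> 'a \<Rightarrow> bool) \<Rightarrow> 'a \<Rightarrow> 'a set" where
  "wwdown X le x = {a\<in>X. way_below X le a x}"

definition continuous_poset :: "'a set \<Rightarrow> ('a \<Rightarrow> 'a \<Rightarrow> bool) \<Rightarrow> bool" where
  "continuous_poset X le \<longleftrightarrow> poset X le \<and>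
     (\<exists>B\<subseteq>X. \<forall>x\<in>X. \<exists>S\<subseteq>B \<inter> wwdown X le x. directed X le S \<and> is_sup X le S x)"

definition continuous_dcpo :: "'a set \<Rightarrow> ('a \<Rightarrow> 'a \<Rightarrow> bool) \<Rightarrow> bool" where
  "continuous_dcpo X le \<longleftrightarrow> continuous_poset X le \<and>
     (\<forall>S. directed X le S \<longrightarrow> (\<exists>s. is_sup X le S s))"

definition maxset :: "'a set \<Rightarrow> ('a \<Rightarrow> 'a \<Rightarrow> bool) \<Rightarrow> 'a set" where
  "maxset X le = {x\<in>X. \<forall>y\<in>X. le x y \<longrightarrow> y = x}"

definition scott_open :: "'a set \<Rightarrow> ('a \<Rightarrow> 'a \<Rightarrow> bool) \<Rightarrow> 'a set \<Rightarrow> bool" where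
  "scott_open X le U \<longleftrightarrow> U \<subseteq> X \<and> (\<forall>x\<in>U. \<forall>y\<in>X. le x y \<longrightarrow> y \<in> U) \<and>
     (\<forall>S s. directed X le S \<and> is_sup X le S s \<and> s \<in> U \<longrightarrow> S \<inter> U \<noteq> {})"

definition scott_compact :: "'a set \<Rightarrow> ('a \<Rightarrow> 'a \<Rightarrow> bool) \<Rightarrow> 'a set \<Rightarrow> bool" where
  "scott_compact X le K \<longleftrightarrow> K \<subseteq> X \<and>
     (\<forall>\<U>. (\<forall>U\<in>\<U>. scott_open X le U) \<and> K \<subseteq> \<Union>\<U> \<longrightarrow>
        (\<exists>\<F>\<subseteq>\<U>. finite \<F> \<and> K \<subseteq> \<Union>\<F>))"

definition bicontinuous :: "'a set \<Rightarrow> ('a \<Rightarrow> 'a \<Rightarrow> bool) \<Rightarrow> bool" where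
  "bicontinuous X le \<longleftrightarrow> continuous_poset X le \<and>
     (\<forall>x\<in>X. \<forall>y\<in>X. way_below X le x y \<longleftrightarrow>
        (\<forall>S i. filtered X le S \<and> is_inf X le S i \<and> le i x \<longrightarrow> (\<exists>s\<in>S. le s y))) \<and>
     (\<forall>x\<in>X. filtered X le (wwup X le x) \<and> is_inf X le (wwup X le x) x)"

definition interval_topology :: "'a set \<Rightarrow> ('a \<Rightarrow> 'a \<Rightarrow> bool) \<Rightarrow> 'a topology" where
  "interval_topology X le =
     topology_generated_by {wwup X le a \<inter> wwdown X le b | a b. a \<in> X \<and> b \<in> X}"

definition globally_hyperbolic :: "'a set \<Rightarrow> ('a \<Rightarrow> 'a \<Rightarrow> bool) \<Rightarrow> bool" where
  "globally_hyperbolic X le \<longleftrightarrow> bicontinuous X le \<and>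
     (\<forall>a\<in>X. \<forall>b\<in>X. compactin (interval_topology X le) {z\<in>X. le a z \<and> le z b})"

definition G_arrow :: "'a set \<Rightarrow> ('a \<Rightarrow> 'a \<Rightarrow> bool) \<Rightarrow> 'b set \<Rightarrow> ('b \<Rightarrow> 'b \<Rightarrow> bool) \<Rightarrow> ('a \<Rightarrow> 'b) \<Rightarrow> bool" where
  "G_arrow X le Y le' f \<longleftrightarrow> f \<in> X \<rightarrow> Y \<and>
     (\<forall>x\<in>X. \<forall>y\<in>X. le x y \<longrightarrow> le' (f x) (f y)) \<and>
     continuous_map (interval_topology X le) (interval_topology Y le') f"

text \<open>Interval posets. The binary infima occurring in the axioms are asserted to exist.\<close>
definition interval_poset :: "'a set \<Rightarrow> ('a \<Rightarrow> 'a \<Rightarrow> bool) \<Rightarrow> ('a \<Rightarrow> 'a) \<Rightarrow> ('a \<Rightarrow> 'a) \<Rightarrow> bool" where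
  "interval_poset D le l r \<longleftrightarrow> poset D le \<and>
     (\<forall>x\<in>D. l x \<in> maxset D le \<and> r x \<in> maxset D le) \<and>
     (\<forall>x\<in>D. is_inf D le {l x, r x} x) \<and>
     (\<forall>x\<in>D. \<forall>y\<in>D. r x = l y \<longrightarrow>
        (\<exists>z. is_inf D le {x, y} z \<and> l z = l x \<and> r z = r y)) \<and>
     (\<forall>x\<in>D. \<forall>p\<in>maxset D le. le x p \<longrightarrow>
        (\<exists>z. is_inf D le {l x, p} z \<and> l z = l x \<and> r z = p) \<and>
        (\<exists>z. is_inf D le {p, r x} z \<and> l z = p \<and> r z = r x))"

definition max_order :: "'a set \<Rightarrow> ('a \<Rightarrow> 'a) \<Rightarrow> ('a \<Rightarrow> 'a) \<Rightarrow> 'a \<Rightarrow> 'a \<Rightarrow> bool" where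
  "max_order D l r a b \<longleftrightarrow> (\<exists>z\<in>D. l z = a \<and> r z = b)"

definition interval_domain :: "'a set \<Rightarrow> ('a \<Rightarrow> 'a \<Rightarrow> bool) \<Rightarrow> ('a \<Rightarrow> 'a) \<Rightarrow> ('a \<Rightarrow> 'a) \<Rightarrow> bool" where
  "interval_domain D le l r \<longleftrightarrow> interval_poset D le l r \<and> continuous_dcpo D le \<and>
     \<comment> \<open>(i)\<close>
     (\<forall>x\<in>D. \<forall>p\<in>wwup D le x \<inter> maxset D le.
        (\<forall>z. is_inf D le {l x, p} z \<longrightarrow> wwup D le z \<noteq> {}) \<and>
        (\<forall>z. is_inf D le {p, r x} z \<longrightarrow> wwup D le z \<noteq> {})) \<and>
     \<comment> \<open>(ii)\<close>
     (\<forall>x\<in>D.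
        (wwup D le x \<noteq> {} \<longleftrightarrow>
          (\<forall>y\<in>D. l y = l x \<and> le y x \<longrightarrow> way_below {z\<in>D. r z = r y} le y (r y))) \<and>
        (wwup D le x \<noteq> {} \<longleftrightarrow>
          (\<forall>y\<in>D. r y = r x \<and> le y x \<longrightarrow> way_below {z\<in>D. l z = l y} le y (l y)))) \<and>
     \<comment> \<open>(iii)\<close>
     (\<forall>p\<in>maxset D le. \<forall>S s. directed D le S \<and> S \<subseteq> {z\<in>D. l z = p} \<and> is_sup D le S s \<longrightarrow>
        l s = p \<and>
        (\<forall>q\<in>maxset D le. \<forall>T t. directed D le T \<and> T \<subseteq> {z\<in>D. l z = q} \<and> is_sup D le T t
            \<and> r ` T = r ` S \<longrightarrow> r t = r s)) \<and>
     (\<forall>q\<in>maxset D le. \<forall>S s. directed D le S \<and> S \<subseteq> {z\<in>D. r z = q} \<and> is_sup D le S s \<longrightarrow>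
        r s = q \<and>
        (\<forall>p\<in>maxset D le. \<forall>T t. directed D le T \<and> T \<subseteq> {z\<in>D. r z = p} \<and> is_sup D le T t
            \<and> l ` T = l ` S \<longrightarrow> l t = l s)) \<and>
     \<comment> \<open>(iv)\<close>
     (\<forall>x\<in>D. scott_compact D le {y\<in>maxset D le. le x y})"

definition scott_continuous :: "'a set \<Rightarrow> ('a \<Rightarrow> 'a \<Rightarrow> bool) \<Rightarrow> 'b set \<Rightarrow> ('b \<Rightarrow> 'b \<Rightarrow> bool) \<Rightarrow> ('a \<Rightarrow> 'b) \<Rightarrow> bool" where
  "scott_continuous D le E le' f \<longleftrightarrow> f \<in> D \<rightarrow> E \<and>
     (\<forall>S s. directed D le S \<and> is_sup D le S s \<longrightarrow> is_sup E le' (f ` S) (f s))"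

definition IN_arrow :: "'a set \<Rightarrow> ('a \<Rightarrow> 'a \<Rightarrow> bool) \<Rightarrow> ('a \<Rightarrow> 'a) \<Rightarrow> ('a \<Rightarrow> 'a) \<Rightarrow>
    'b set \<Rightarrow> ('b \<Rightarrow> 'b \<Rightarrow> bool) \<Rightarrow> ('b \<Rightarrow> 'b) \<Rightarrow> ('b \<Rightarrow> 'b) \<Rightarrow> ('a \<Rightarrow> 'b) \<Rightarrow> bool" where
  "IN_arrow D le l r E le' l' r' f \<longleftrightarrow> scott_continuous D le E le' f \<and>
     (\<forall>x\<in>D. f (l x) = l' (f x) \<and> f (r x) = r' (f x))"

definition max_map :: "'a set \<Rightarrow> ('a \<Rightarrow> 'a \<Rightarrow> bool) \<Rightarrow> ('a \<Rightarrow> 'b) \<Rightarrow> ('a \<Rightarrow> 'b)" where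
  "max_map D le f = restrict f (maxset D le)"

end

theory Submission
  imports Defs
begin



lemma poset_refl: "poset X le \<Longrightarrow> x \<in> X \<Longrightarrow> le x x"
  unfolding poset_def by blast
lemma poset_antisym: "poset X le \<Longrightarrow> x \<in> X \<Longrightarrow> y \<in> X \<Longrightarrow> le x y \<Longrightarrow> le y x \<Longrightarrow> x = y"
  unfolding poset_def by blast
lemma poset_trans: "poset X le \<Longrightarrow> x \<in> X \<Longrightarrow> y \<in> X \<Longrightarrow> z \<in> X \<Longrightarrow> le x y \<Longrightarrow> le y z \<Longrightarrow> le x z"
  unfolding poset_def by blast

lemma wb_le: assumes "poset X le" "way_below X le x y" shows "le x y"
proof -
  have y: "y \<in> X" using assms(2) unfolding way_below_def by blast
  have "directed X le {y}" using y poset_refl[OF assms(1) y] unfolding directed_def by auto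
  moreover have "is_sup X le {y} y" using y poset_refl[OF assms(1) y] unfolding is_sup_def by auto
  ultimately show ?thesis using assms(2) poset_refl[OF assms(1) y] unfolding way_below_def by blast
qed

lemma wb_mono_right: assumes "poset X le" "way_below X le x y" "le y y'" "y' \<in> X"
  shows "way_below X le x y'"
  unfolding way_below_def
proof (intro conjI allI impI)
  show "x \<in> X" using assms(2) unfolding way_below_def by blast
  show "y' \<in> X" by fact
  fix S s assume h: "directed X le S \<and> is_sup X le S s \<and> le y' s"
  then have "le y s" using assms poset_trans[OF assms(1), of y y' s] unfolding way_below_def is_sup_def by blast
  then show "\<exists>a\<in>S. le x a" using h assms(2) unfolding way_below_def by blast
qed

lemma wb_mono_left: assumes "poset X le" "way_below X le x y" "le x' x" "x' \<in> X"
  shows "way_below X le x' y"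
  unfolding way_below_def
proof (intro conjI allI impI)
  show "x' \<in> X" by fact
  show "y \<in> X" using assms(2) unfolding way_below_def by blast
  have xX: "x \<in> X" using assms(2) unfolding way_below_def by blast
  fix S s assume h: "directed X le S \<and> is_sup X le S s \<and> le y s"
  then obtain a where a: "a \<in> S" "le x a" using assms(2) unfolding way_below_def by blast
  have "a \<in> X" using h a unfolding directed_def by blast
  then have "le x' a" using poset_trans[OF assms(1) assms(4) xX] assms(3) a by blast
  then show "\<exists>a\<in>S. le x' a" using a by blast
qed

lemma sup_unique: assumes "poset X le" "is_sup X le S a" "is_sup X le S b" shows "a = b"
proof -
  have "le a b" "le b a" "a \<in> X" "b \<in> X" using assms(2,3) unfolding is_sup_def by auto
  then show ?thesis using poset_antisym[OF assms(1)] by blast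
qed
lemma inf_unique: assumes "poset X le" "is_inf X le S a" "is_inf X le S b" shows "a = b"
proof -
  have "le a b" "le b a" "a \<in> X" "b \<in> X" using assms(2,3) unfolding is_inf_def by auto
  then show ?thesis using poset_antisym[OF assms(1)] by blast
qed

locale idom =
  fixes D :: "'a set" and le :: "'a \<Rightarrow> 'a \<Rightarrow> bool" and l r :: "'a \<Rightarrow> 'a"
  assumes ID: "interval_domain D le l r"
begin

abbreviation M where "M \<equiv> maxset D le"
abbreviation lo where "lo \<equiv> max_order D l r"

lemmas IDc = ID[unfolded interval_domain_def]
lemmas IP = IDc[THEN conjunct1]
lemmas CD = IDc[THEN conjunct2, THEN conjunct1]
lemmas Di = IDc[THEN conjunct2, THEN conjunct2, THEN conjunct1]
lemmas Dii = IDc[THEN conjunct2, THEN conjunct2, THEN conjunct2, THEN conjunct1]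
lemmas Diii = IDc[THEN conjunct2, THEN conjunct2, THEN conjunct2, THEN conjunct2, THEN conjunct1]
lemmas Diii' = IDc[THEN conjunct2, THEN conjunct2, THEN conjunct2, THEN conjunct2, THEN conjunct2, THEN conjunct1]
lemmas Div = IDc[THEN conjunct2, THEN conjunct2, THEN conjunct2, THEN conjunct2, THEN conjunct2, THEN conjunct2]
lemmas IPc = IP[unfolded interval_poset_def]
lemmas PO = IPc[THEN conjunct1]
lemmas lrM = IPc[THEN conjunct2, THEN conjunct1]
lemmas inflr = IPc[THEN conjunct2, THEN conjunct2, THEN conjunct1]
lemmas concatc = IPc[THEN conjunct2, THEN conjunct2, THEN conjunct2, THEN conjunct1]
lemmas splitc = IPc[THEN conjunct2, THEN conjunct2, THEN conjunct2, THEN conjunct2]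

lemma M_sub: "M \<subseteq> D" unfolding maxset_def by auto
lemma lD: "x \<in> D \<Longrightarrow> l x \<in> M" using lrM by blast
lemma rD: "x \<in> D \<Longrightarrow> r x \<in> M" using lrM by blast
lemma inf_lr: "x \<in> D \<Longrightarrow> is_inf D le {l x, r x} x" using inflr by blast
lemma le_l: "x \<in> D \<Longrightarrow> le x (l x)" using inf_lr unfolding is_inf_def by blast
lemma le_r: "x \<in> D \<Longrightarrow> le x (r x)" using inf_lr unfolding is_inf_def by blast

lemma maxE: "p \<in> M \<Longrightarrow> y \<in> D \<Longrightarrow> le p y \<Longrightarrow> y = p" unfolding maxset_def by blast

lemma l_max: "p \<in> M \<Longrightarrow> l p = p"
  using maxE[of p "l p"] le_l[of p] lD[of p] M_sub by auto
lemma r_max: "p \<in> M \<Longrightarrow> r p = p"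
  using maxE[of p "r p"] le_r[of p] rD[of p] M_sub by auto

lemma concat: "x \<in> D \<Longrightarrow> y \<in> D \<Longrightarrow> r x = l y \<Longrightarrow> \<exists>z. is_inf D le {x, y} z \<and> l z = l x \<and> r z = r y"
  using concatc by blast

lemma splitp: "x \<in> D \<Longrightarrow> p \<in> M \<Longrightarrow> le x p \<Longrightarrow>
        (\<exists>z. is_inf D le {l x, p} z \<and> l z = l x \<and> r z = p) \<and>
        (\<exists>z. is_inf D le {p, r x} z \<and> l z = p \<and> r z = r x)"
  using splitc by blast

lemma lo_def2: "lo a b \<longleftrightarrow> (\<exists>z\<in>D. l z = a \<and> r z = b)" unfolding max_order_def by simp

lemma lo_M: "lo a b \<Longrightarrow> a \<in> M \<and> b \<in> M" unfolding lo_def2 using lD rD by blast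

lemma B5: assumes "x \<in> D" "p \<in> M" "le x p" shows "lo (l x) p \<and> lo p (r x)"
  using splitp[OF assms] unfolding lo_def2 is_inf_def by blast

lemma lo_x: "x \<in> D \<Longrightarrow> lo (l x) (r x)" unfolding lo_def2 by blast

lemma B6: assumes "x \<in> D" "y \<in> D" "l x = l y" "r x = r y" shows "x = y"
proof -
  have "is_inf D le {l x, r x} y" using inf_lr[OF assms(2)] assms(3,4) by simp
  then show ?thesis using inf_unique[OF PO inf_lr[OF assms(1)]] by simp
qed

lemma B7: assumes "x \<in> D" "y \<in> D" shows "le x y \<longleftrightarrow> lo (l x) (l y) \<and> lo (r y) (r x)"
proof
  assume "le x y"
  moreover have "l y \<in> D" "r y \<in> D" using lD rD M_sub assms by blast+
  ultimately have "le x (l y)" "le x (r y)" using le_l[OF assms(2)] le_r[OF assms(2)] assms poset_trans[OF PO, of x y] by blast+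
  then show "lo (l x) (l y) \<and> lo (r y) (r x)" using B5 assms lD rD by blast
next
  assume "lo (l x) (l y) \<and> lo (r y) (r x)"
  then obtain u v where u: "u \<in> D" "l u = l x" "r u = l y" and v: "v \<in> D" "l v = r y" "r v = r x"
    unfolding lo_def2 by blast
  obtain w where w: "is_inf D le {u, y} w" "l w = l x" "r w = r y" using concat[OF u(1) assms(2) u(3)] u by auto
  have wD: "w \<in> D" using w unfolding is_inf_def by blast
  obtain w' where w': "is_inf D le {w, v} w'" "l w' = l x" "r w' = r x" using concat[OF wD v(1)] w v by auto
  have w'D: "w' \<in> D" using w' unfolding is_inf_def by blast
  have "w' = x" using B6[OF w'D assms(1)] w' by simp
  moreover have "le w' w" "le w y" using w w' unfolding is_inf_def by auto
  ultimately show "le x y" using poset_trans[OF PO] wD assms by blast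
qed

lemma lo_refl: "a \<in> M \<Longrightarrow> lo a a" unfolding lo_def2 using M_sub l_max r_max by blast

lemma lo_trans: assumes "lo a b" "lo b c" shows "lo a c"
proof -
  obtain u v where u: "u \<in> D" "l u = a" "r u = b" and v: "v \<in> D" "l v = b" "r v = c"
    using assms unfolding lo_def2 by blast
  obtain w where w: "is_inf D le {u, v} w" "l w = a" "r w = c" using concat[OF u(1) v(1)] u v by auto
  then show ?thesis unfolding lo_def2 is_inf_def by blast
qed

lemma lo_antisym: assumes "lo a b" "lo b a" shows "a = b"
proof -
  obtain u v where u: "u \<in> D" "l u = a" "r u = b" and v: "v \<in> D" "l v = b" "r v = a"
    using assms unfolding lo_def2 by blast
  have "{l u, r u} = {l v, r v}" using u v by auto
  then have "is_inf D le {l u, r u} v" using inf_lr[OF v(1)] by simp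
  then have "u = v" using inf_unique[OF PO inf_lr[OF u(1)]] by simp
  then show ?thesis using u v by simp
qed

lemma POM: "poset M lo"
  unfolding poset_def
proof (intro conjI ballI impI)
  show "lo x x" if "x \<in> M" for x using lo_refl that .
  show "x = y" if "lo x y \<and> lo y x" for x y using lo_antisym that by blast
  show "lo x z" if "lo x y \<and> lo y z" for x y z using lo_trans that by blast
qed

definition iv where "iv a b = (SOME z. z \<in> D \<and> l z = a \<and> r z = b)"

lemma iv: "lo a b \<Longrightarrow> iv a b \<in> D \<and> l (iv a b) = a \<and> r (iv a b) = b"
  unfolding iv_def lo_def2 by (rule someI_ex) blast

lemma iv_lr: assumes "x \<in> D" shows "iv (l x) (r x) = x"
proof -
  have "iv (l x) (r x) \<in> D \<and> l (iv (l x) (r x)) = l x \<and> r (iv (l x) (r x)) = r x" using iv[OF lo_x[OF assms]] .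
  then show ?thesis using B6[OF _ assms] by blast
qed

lemma le_M: "x \<in> D \<Longrightarrow> p \<in> M \<Longrightarrow> le x p \<longleftrightarrow> lo (l x) p \<and> lo p (r x)"
  using B7[of x p] M_sub l_max r_max by auto

end



context idom begin

lemma iv_le_iff: "lo a b \<Longrightarrow> lo c d \<Longrightarrow> le (iv a b) (iv c d) \<longleftrightarrow> lo a c \<and> lo d b"
  using B7[of "iv a b" "iv c d"] iv[of a b] iv[of c d] by simp

lemma iv_le_M: "lo a b \<Longrightarrow> p \<in> M \<Longrightarrow> le (iv a b) p \<longleftrightarrow> lo a p \<and> lo p b"
  using le_M[of "iv a b" p] iv[of a b] by simp

lemma iv_self: "p \<in> M \<Longrightarrow> iv p p = p"
  using iv_lr[of p] l_max[of p] r_max[of p] M_sub by auto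

lemma dirD: "directed D le S \<Longrightarrow> S \<subseteq> D" unfolding directed_def by blast

lemma dir_imgl: assumes "directed D le S" shows "directed M lo (l ` S)"
  unfolding directed_def
proof (intro conjI ballI)
  show "l ` S \<subseteq> M" using dirD[OF assms] lD by blast
  show "l ` S \<noteq> {}" using assms unfolding directed_def by blast
  fix a b assume "a \<in> l ` S" "b \<in> l ` S"
  then obtain x y where xy: "x \<in> S" "y \<in> S" "a = l x" "b = l y" by blast
  then obtain z where z: "z \<in> S" "le x z" "le y z" using assms unfolding directed_def by blast
  have "lo a (l z)" "lo b (l z)" using B7 z xy dirD[OF assms] by blast+
  then show "\<exists>c\<in>l ` S. lo a c \<and> lo b c" using z by blast
qed

lemma filt_imgr: assumes "directed D le S" shows "filtered M lo (r ` S)"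
  unfolding filtered_def
proof (intro conjI ballI)
  show "r ` S \<subseteq> M" using dirD[OF assms] rD by blast
  show "r ` S \<noteq> {}" using assms unfolding directed_def by blast
  fix a b assume "a \<in> r ` S" "b \<in> r ` S"
  then obtain x y where xy: "x \<in> S" "y \<in> S" "a = r x" "b = r y" by blast
  then obtain z where z: "z \<in> S" "le x z" "le y z" using assms unfolding directed_def by blast
  have "lo (r z) a" "lo (r z) b" using B7 z xy dirD[OF assms] by blast+
  then show "\<exists>c\<in>r ` S. lo c a \<and> lo c b" using z by blast
qed

lemma cross: assumes "directed D le S" "x \<in> S" "y \<in> S" shows "lo (l x) (r y)"
proof -
  obtain z where z: "z \<in> S" "le x z" "le y z" using assms unfolding directed_def by blast
  have zD: "z \<in> D" using z dirD[OF assms(1)] by blast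
  have "lo (l x) (l z)" "lo (r z) (r y)" using B7 z assms dirD[OF assms(1)] by blast+
  then show ?thesis using lo_x[OF zD] lo_trans by blast
qed

lemma iii_r: "q \<in> M \<Longrightarrow> directed D le S \<Longrightarrow> S \<subseteq> {z\<in>D. r z = q} \<Longrightarrow> is_sup D le S s \<Longrightarrow> r s = q"
  using Diii'[rule_format, of q S s] by blast
lemma iii_r2: "q \<in> M \<Longrightarrow> directed D le S \<Longrightarrow> S \<subseteq> {z\<in>D. r z = q} \<Longrightarrow> is_sup D le S s \<Longrightarrow>
   p \<in> M \<Longrightarrow> directed D le T \<Longrightarrow> T \<subseteq> {z\<in>D. r z = p} \<Longrightarrow> is_sup D le T t \<Longrightarrow> l ` T = l ` S \<Longrightarrow> l t = l s"
  using Diii'[rule_format, of q S s] by blast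
lemma iii_l: "p \<in> M \<Longrightarrow> directed D le S \<Longrightarrow> S \<subseteq> {z\<in>D. l z = p} \<Longrightarrow> is_sup D le S s \<Longrightarrow> l s = p"
  using Diii[rule_format, of p S s] by blast
lemma iii_l2: "p \<in> M \<Longrightarrow> directed D le S \<Longrightarrow> S \<subseteq> {z\<in>D. l z = p} \<Longrightarrow> is_sup D le S s \<Longrightarrow>
   q \<in> M \<Longrightarrow> directed D le T \<Longrightarrow> T \<subseteq> {z\<in>D. l z = q} \<Longrightarrow> is_sup D le T t \<Longrightarrow> r ` T = r ` S \<Longrightarrow> r t = r s"
  using Diii[rule_format, of p S s] by blast

lemma dcpo_sup: "directed D le S \<Longrightarrow> \<exists>s. is_sup D le S s"
  using CD unfolding continuous_dcpo_def by blast

lemma supD: "is_sup D le S s \<Longrightarrow> s \<in> D" unfolding is_sup_def by blast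

lemma dirM_sup: assumes L: "directed M lo L" and u: "u \<in> M" "\<forall>x\<in>L. lo x u"
  shows "\<exists>a. is_sup M lo L a"
proof -
  define T where "T = (\<lambda>u'. (\<lambda>x. iv x u') ` L)"
  have T: "directed D le (T u') \<and> T u' \<subseteq> {z\<in>D. r z = u'} \<and> l ` (T u') = L"
    if uu: "u' \<in> M" "\<forall>x\<in>L. lo x u'" for u'
  proof -
    have iv': "\<forall>x\<in>L. iv x u' \<in> D \<and> l (iv x u') = x \<and> r (iv x u') = u'" using iv uu by blast
    have "directed D le (T u')" unfolding directed_def T_def
    proof (intro conjI ballI)
      show "(\<lambda>x. iv x u') ` L \<subseteq> D" using iv' by blast
      show "(\<lambda>x. iv x u') ` L \<noteq> {}" using L unfolding directed_def by blast
      fix a b assume "a \<in> (\<lambda>x. iv x u') ` L" "b \<in> (\<lambda>x. iv x u') ` L"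
      then obtain x y where xy: "x\<in>L" "y\<in>L" "a = iv x u'" "b = iv y u'" by blast
      obtain z where z: "z\<in>L" "lo x z" "lo y z" using L xy unfolding directed_def by blast
      have "le a (iv z u')" "le b (iv z u')"
        using iv_le_iff[of x u' z u'] iv_le_iff[of y u' z u'] uu xy z lo_refl by auto
      then show "\<exists>c\<in>(\<lambda>x. iv x u') ` L. le a c \<and> le b c" using z by blast
    qed
    moreover have "T u' \<subseteq> {z\<in>D. r z = u'}" using iv' unfolding T_def by auto
    moreover have "l ` T u' = L" using iv' unfolding T_def image_image by simp
    ultimately show ?thesis by blast
  qed
  obtain t where t: "is_sup D le (T u) t" using dcpo_sup T[OF u] by blast
  have tD: "t \<in> D" using supD[OF t] .
  have "is_sup M lo L (l t)" unfolding is_sup_def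
  proof (intro conjI ballI impI)
    show "l t \<in> M" using lD tD by blast
    fix x assume x: "x \<in> L"
    then have "iv x u \<in> T u" unfolding T_def by blast
    then have "le (iv x u) t" using t unfolding is_sup_def by blast
    then show "lo x (l t)" using B7[of "iv x u" t] iv[of x u] u x tD by auto
  next
    fix u' assume uu: "u' \<in> M" "\<forall>x\<in>L. lo x u'"
    obtain t' where t': "is_sup D le (T u') t'" using dcpo_sup T[OF uu] by blast
    have "r t' = u'" using iii_r[OF uu(1) _ _ t'] T[OF uu] by blast
    moreover have "l t' = l t"
      using iii_r2[OF u(1) _ _ t uu(1) _ _ t'] T[OF uu] T[OF u] by simp
    moreover have "t' \<in> D" using supD[OF t'] .
    ultimately show "lo (l t) u'" unfolding lo_def2 by blast
  qed
  then show ?thesis by blast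
qed

lemma filtM_inf: assumes R: "filtered M lo R" and p: "p \<in> M" "\<forall>x\<in>R. lo p x"
  shows "\<exists>b. is_inf M lo R b"
proof -
  define T where "T = (\<lambda>p'. (\<lambda>x. iv p' x) ` R)"
  have T: "directed D le (T p') \<and> T p' \<subseteq> {z\<in>D. l z = p'} \<and> r ` (T p') = R"
    if pp: "p' \<in> M" "\<forall>x\<in>R. lo p' x" for p'
  proof -
    have iv': "\<forall>x\<in>R. iv p' x \<in> D \<and> l (iv p' x) = p' \<and> r (iv p' x) = x" using iv pp by blast
    have "directed D le (T p')" unfolding directed_def T_def
    proof (intro conjI ballI)
      show "(\<lambda>x. iv p' x) ` R \<subseteq> D" using iv' by blast
      show "(\<lambda>x. iv p' x) ` R \<noteq> {}" using R unfolding filtered_def by blast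
      fix a b assume "a \<in> (\<lambda>x. iv p' x) ` R" "b \<in> (\<lambda>x. iv p' x) ` R"
      then obtain x y where xy: "x\<in>R" "y\<in>R" "a = iv p' x" "b = iv p' y" by blast
      obtain z where z: "z\<in>R" "lo z x" "lo z y" using R xy unfolding filtered_def by blast
      have "le a (iv p' z)" "le b (iv p' z)"
        using iv_le_iff[of p' x p' z] iv_le_iff[of p' y p' z] pp xy z lo_refl by auto
      then show "\<exists>c\<in>(\<lambda>x. iv p' x) ` R. le a c \<and> le b c" using z by blast
    qed
    moreover have "T p' \<subseteq> {z\<in>D. l z = p'}" using iv' unfolding T_def by auto
    moreover have "r ` T p' = R" using iv' unfolding T_def image_image by simp
    ultimately show ?thesis by blast
  qed
  obtain t where t: "is_sup D le (T p) t" using dcpo_sup T[OF p] by blast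
  have tD: "t \<in> D" using supD[OF t] .
  have "is_inf M lo R (r t)" unfolding is_inf_def
  proof (intro conjI ballI impI)
    show "r t \<in> M" using rD tD by blast
    fix x assume x: "x \<in> R"
    then have "iv p x \<in> T p" unfolding T_def by blast
    then have "le (iv p x) t" using t unfolding is_sup_def by blast
    then show "lo (r t) x" using B7[of "iv p x" t] iv[of p x] p x tD by auto
  next
    fix p' assume pp: "p' \<in> M" "\<forall>x\<in>R. lo p' x"
    obtain t' where t': "is_sup D le (T p') t'" using dcpo_sup T[OF pp] by blast
    have "l t' = p'" using iii_l[OF pp(1) _ _ t'] T[OF pp] by blast
    moreover have "r t' = r t"
      using iii_l2[OF p(1) _ _ t pp(1) _ _ t'] T[OF pp] T[OF p] by simp
    moreover have "t' \<in> D" using supD[OF t'] .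
    ultimately show "lo p' (r t)" unfolding lo_def2 by blast
  qed
  then show ?thesis by blast
qed

lemma SUP: assumes S: "directed D le S" and s: "is_sup D le S s"
  shows "is_sup M lo (l ` S) (l s) \<and> is_inf M lo (r ` S) (r s)"
proof -
  have sD: "s \<in> D" using supD[OF s] .
  have SD: "S \<subseteq> D" using dirD[OF S] .
  have ub: "\<forall>x\<in>S. le x s" using s unfolding is_sup_def by blast
  have ubl: "\<forall>x\<in>l ` S. lo x (l s)" using ub B7 SD sD by blast
  obtain a where a: "is_sup M lo (l ` S) a" using dirM_sup[OF dir_imgl[OF S] lD[OF sD] ubl] by blast
  have aM: "a \<in> M" using a unfolding is_sup_def by blast
  have aR: "\<forall>y\<in>r ` S. lo a y"
  proof
    fix y assume "y \<in> r ` S"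
    then obtain y0 where y0: "y0 \<in> S" "y = r y0" by blast
    have "\<forall>x\<in>l ` S. lo x y" using cross[OF S _ y0(1)] y0(2) by blast
    moreover have "y \<in> M" using rD y0 SD by blast
    ultimately show "lo a y" using a unfolding is_sup_def by blast
  qed
  obtain b where b: "is_inf M lo (r ` S) b" using filtM_inf[OF filt_imgr[OF S] aM aR] by blast
  have ab: "lo a b" using b aR aM unfolding is_inf_def by blast
  have w: "iv a b \<in> D" "l (iv a b) = a" "r (iv a b) = b" using iv[OF ab] by auto
  have "\<forall>x\<in>S. le x (iv a b)"
  proof
    fix x assume x: "x \<in> S"
    have "lo (l x) a" using a x unfolding is_sup_def by blast
    moreover have "lo b (r x)" using b x unfolding is_inf_def by blast
    ultimately show "le x (iv a b)" using B7[of x "iv a b"] w x SD by auto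
  qed
  then have "le s (iv a b)" using s w unfolding is_sup_def by blast
  then have 1: "lo (l s) a" "lo b (r s)" using B7[of s "iv a b"] w sD by auto
  have 2: "lo a (l s)" using a ubl lD[OF sD] unfolding is_sup_def by blast
  have ls: "l s = a" using lo_antisym 1 2 by blast
  have "\<forall>x\<in>r ` S. lo (r s) x" using ub B7 SD sD by blast
  then have 3: "lo (r s) b" using b rD[OF sD] unfolding is_inf_def by blast
  have rs: "r s = b" using lo_antisym 1 3 by blast
  show ?thesis using a b ls rs by simp
qed

end



context idom begin

abbreviation wb where "wb \<equiv> way_below M lo"
definition wbf where "wbf a b \<longleftrightarrow> (\<forall>S i. filtered M lo S \<and> is_inf M lo S i \<and> lo i a \<longrightarrow> (\<exists>s\<in>S. lo s b))"

lemma W1a: assumes ac: "lo a c"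
  shows "way_below {z\<in>D. r z = c} le (iv a c) c \<longleftrightarrow>
         (\<forall>L. directed M lo L \<and> is_sup M lo L c \<longrightarrow> (\<exists>x\<in>L. lo a x))"
proof
  let ?Dc = "{z\<in>D. r z = c}"
  have cM: "c \<in> M" and aM: "a \<in> M" using lo_M[OF ac] by auto
  have cDc: "c \<in> ?Dc" using cM M_sub r_max by auto
  {
  assume wbc: "way_below ?Dc le (iv a c) c"
  show "\<forall>L. directed M lo L \<and> is_sup M lo L c \<longrightarrow> (\<exists>x\<in>L. lo a x)"
  proof (intro allI impI)
    fix L assume L: "directed M lo L \<and> is_sup M lo L c"
    have Lc: "\<forall>x\<in>L. lo x c" using L unfolding is_sup_def by blast
    define S where "S = (\<lambda>x. iv x c) ` L"
    have ivL: "\<forall>x\<in>L. iv x c \<in> D \<and> l (iv x c) = x \<and> r (iv x c) = c" using iv Lc by blast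
    have dS: "directed ?Dc le S" unfolding directed_def S_def
    proof (intro conjI ballI)
      show "(\<lambda>x. iv x c) ` L \<subseteq> ?Dc" using ivL by blast
      show "(\<lambda>x. iv x c) ` L \<noteq> {}" using L unfolding directed_def by blast
      fix a b assume "a \<in> (\<lambda>x. iv x c) ` L" "b \<in> (\<lambda>x. iv x c) ` L"
      then obtain x y where xy: "x\<in>L" "y\<in>L" "a = iv x c" "b = iv y c" by blast
      obtain z where z: "z\<in>L" "lo x z" "lo y z" using L xy unfolding directed_def by blast
      have "le a (iv z c)" "le b (iv z c)"
        using iv_le_iff[of x c z c] iv_le_iff[of y c z c] Lc xy z lo_refl cM by auto
      then show "\<exists>e\<in>(\<lambda>x. iv x c) ` L. le a e \<and> le b e" using z by blast
    qed
    have sS: "is_sup ?Dc le S c" unfolding is_sup_def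
    proof (intro conjI ballI impI)
      show "c \<in> ?Dc" by fact
      fix y assume "y \<in> S"
      then obtain x where x: "x \<in> L" "y = iv x c" unfolding S_def by blast
      show "le y c" using iv_le_M[of x c c] Lc lo_refl[OF cM] x cM by auto
    next
      fix u assume u: "u \<in> ?Dc" "\<forall>y\<in>S. le y u"
      have "\<forall>x\<in>L. lo x (l u)"
      proof
        fix x assume x: "x \<in> L"
        then have "le (iv x c) u" using u unfolding S_def by blast
        then show "lo x (l u)" using B7[of "iv x c" u] ivL x u by auto
      qed
      then have "lo c (l u)" using L lD u unfolding is_sup_def by blast
      then show "le c u" using B7[of c u] l_max[OF cM] r_max[OF cM] cM M_sub u lo_refl[OF cM] by auto
    qed
    have "le c c" using poset_refl[OF PO] cDc by blast
    then obtain y where y: "y \<in> S" "le (iv a c) y" using wbc dS sS unfolding way_below_def by blast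
    then obtain x where x: "x \<in> L" "y = iv x c" unfolding S_def by blast
    then have "lo a x" using y iv_le_iff[of a c x c] ac Lc by auto
    then show "\<exists>x\<in>L. lo a x" using x by blast
  qed
  }
  {
  assume H: "\<forall>L. directed M lo L \<and> is_sup M lo L c \<longrightarrow> (\<exists>x\<in>L. lo a x)"
  show "way_below ?Dc le (iv a c) c" unfolding way_below_def
  proof (intro conjI allI impI)
    show "iv a c \<in> ?Dc" using iv[OF ac] by auto
    show "c \<in> ?Dc" by fact
    fix S s assume h: "directed ?Dc le S \<and> is_sup ?Dc le S s \<and> le c s"
    have SD: "S \<subseteq> ?Dc" using h unfolding directed_def by blast
    have dS: "directed D le S" using h SD unfolding directed_def by blast
    have sc: "s = c" using maxE[OF cM] h unfolding is_sup_def by blast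
    have Lc: "\<forall>x\<in>l ` S. lo x c" using SD lo_x by fastforce
    obtain a' where a': "is_sup M lo (l ` S) a'" using dirM_sup[OF dir_imgl[OF dS] cM Lc] by blast
    have a'c: "lo a' c" using a' Lc cM unfolding is_sup_def by blast
    have ivD: "iv a' c \<in> ?Dc" using iv[OF a'c] by auto
    have "\<forall>t\<in>S. le t (iv a' c)"
    proof
      fix t assume t: "t \<in> S"
      have "lo (l t) a'" using a' t unfolding is_sup_def by blast
      then show "le t (iv a' c)" using B7[of t "iv a' c"] iv[OF a'c] t SD lo_refl[OF cM] by auto
    qed
    then have "le s (iv a' c)" using h ivD unfolding is_sup_def by blast
    then have "lo c a'" using B7[of c "iv a' c"] iv[OF a'c] sc l_max[OF cM] cM M_sub by auto
    then have "a' = c" using lo_antisym a'c by blast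
    then obtain x where x: "x \<in> l ` S" "lo a x" using H a' dir_imgl[OF dS] by blast
    then obtain t where t: "t \<in> S" "x = l t" by blast
    show "\<exists>t\<in>S. le (iv a c) t"
      using B7[of "iv a c" t] iv[OF ac] t x SD lo_refl[OF cM] by auto
  qed
  }
qed

lemma W2a: assumes cb: "lo c b"
  shows "way_below {z\<in>D. l z = c} le (iv c b) c \<longleftrightarrow>
         (\<forall>R. filtered M lo R \<and> is_inf M lo R c \<longrightarrow> (\<exists>x\<in>R. lo x b))"
proof
  let ?Dc = "{z\<in>D. l z = c}"
  have cM: "c \<in> M" and bM: "b \<in> M" using lo_M[OF cb] by auto
  have cDc: "c \<in> ?Dc" using cM M_sub l_max by auto
  {
  assume wbc: "way_below ?Dc le (iv c b) c"
  show "\<forall>R. filtered M lo R \<and> is_inf M lo R c \<longrightarrow> (\<exists>x\<in>R. lo x b)"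
  proof (intro allI impI)
    fix R assume R: "filtered M lo R \<and> is_inf M lo R c"
    have Rc: "\<forall>x\<in>R. lo c x" using R unfolding is_inf_def by blast
    define S where "S = (\<lambda>x. iv c x) ` R"
    have ivR: "\<forall>x\<in>R. iv c x \<in> D \<and> l (iv c x) = c \<and> r (iv c x) = x" using iv Rc by blast
    have dS: "directed ?Dc le S" unfolding directed_def S_def
    proof (intro conjI ballI)
      show "(\<lambda>x. iv c x) ` R \<subseteq> ?Dc" using ivR by blast
      show "(\<lambda>x. iv c x) ` R \<noteq> {}" using R unfolding filtered_def by blast
      fix a b assume "a \<in> (\<lambda>x. iv c x) ` R" "b \<in> (\<lambda>x. iv c x) ` R"
      then obtain x y where xy: "x\<in>R" "y\<in>R" "a = iv c x" "b = iv c y" by blast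
      obtain z where z: "z\<in>R" "lo z x" "lo z y" using R xy unfolding filtered_def by blast
      have "le a (iv c z)" "le b (iv c z)"
        using iv_le_iff[of c x c z] iv_le_iff[of c y c z] Rc xy z lo_refl cM by auto
      then show "\<exists>e\<in>(\<lambda>x. iv c x) ` R. le a e \<and> le b e" using z by blast
    qed
    have sS: "is_sup ?Dc le S c" unfolding is_sup_def
    proof (intro conjI ballI impI)
      show "c \<in> ?Dc" by fact
      fix y assume "y \<in> S"
      then obtain x where x: "x \<in> R" "y = iv c x" unfolding S_def by blast
      show "le y c" using iv_le_M[of c x c] Rc lo_refl[OF cM] x cM by auto
    next
      fix u assume u: "u \<in> ?Dc" "\<forall>y\<in>S. le y u"
      have "\<forall>x\<in>R. lo (r u) x"
      proof
        fix x assume x: "x \<in> R"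
        then have "le (iv c x) u" using u unfolding S_def by blast
        then show "lo (r u) x" using B7[of "iv c x" u] ivR x u by auto
      qed
      then have "lo (r u) c" using R rD u unfolding is_inf_def by blast
      then show "le c u" using B7[of c u] l_max[OF cM] r_max[OF cM] cM M_sub u lo_refl[OF cM] by auto
    qed
    have "le c c" using poset_refl[OF PO] cDc by blast
    then obtain y where y: "y \<in> S" "le (iv c b) y" using wbc dS sS unfolding way_below_def by blast
    then obtain x where x: "x \<in> R" "y = iv c x" unfolding S_def by blast
    then have "lo x b" using y iv_le_iff[of c b c x] cb Rc by auto
    then show "\<exists>x\<in>R. lo x b" using x by blast
  qed
  }
  {
  assume H: "\<forall>R. filtered M lo R \<and> is_inf M lo R c \<longrightarrow> (\<exists>x\<in>R. lo x b)"
  show "way_below ?Dc le (iv c b) c" unfolding way_below_def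
  proof (intro conjI allI impI)
    show "iv c b \<in> ?Dc" using iv[OF cb] by auto
    show "c \<in> ?Dc" by fact
    fix S s assume h: "directed ?Dc le S \<and> is_sup ?Dc le S s \<and> le c s"
    have SD: "S \<subseteq> ?Dc" using h unfolding directed_def by blast
    have dS: "directed D le S" using h SD unfolding directed_def by blast
    have sc: "s = c" using maxE[OF cM] h unfolding is_sup_def by blast
    have Rc: "\<forall>x\<in>r ` S. lo c x" using SD lo_x by fastforce
    obtain b' where b': "is_inf M lo (r ` S) b'" using filtM_inf[OF filt_imgr[OF dS] cM Rc] by blast
    have cb': "lo c b'" using b' Rc cM unfolding is_inf_def by blast
    have ivD: "iv c b' \<in> ?Dc" using iv[OF cb'] by auto
    have "\<forall>t\<in>S. le t (iv c b')"
    proof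
      fix t assume t: "t \<in> S"
      have "lo b' (r t)" using b' t unfolding is_inf_def by blast
      then show "le t (iv c b')" using B7[of t "iv c b'"] iv[OF cb'] t SD lo_refl[OF cM] by auto
    qed
    then have "le s (iv c b')" using h ivD unfolding is_sup_def by blast
    then have "lo b' c" using B7[of c "iv c b'"] iv[OF cb'] sc r_max[OF cM] cM M_sub by auto
    then have "b' = c" using lo_antisym cb' by blast
    then obtain x where x: "x \<in> r ` S" "lo x b" using H b' filt_imgr[OF dS] by blast
    then obtain t where t: "t \<in> S" "x = r t" by blast
    show "\<exists>t\<in>S. le (iv c b) t"
      using B7[of "iv c b" t] iv[OF cb] t x SD lo_refl[OF cM] by auto
  qed
  }
qed

end



context idom begin

lemma wwup_iff: "wwup X le' x \<noteq> {} \<longleftrightarrow> (\<exists>y. y \<in> X \<and> way_below X le' x y)"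
  unfolding wwup_def by blast

lemma W1: assumes ab: "lo a b" shows "wwup D le (iv a b) \<noteq> {} \<longleftrightarrow> wb a b"
proof -
  let ?x = "iv a b"
  have x: "?x \<in> D" "l ?x = a" "r ?x = b" using iv[OF ab] by auto
  have aM: "a \<in> M" and bM: "b \<in> M" using lo_M[OF ab] by auto
  have E: "wwup D le ?x \<noteq> {} \<longleftrightarrow>
      (\<forall>y\<in>D. l y = l ?x \<and> le y ?x \<longrightarrow> way_below {z\<in>D. r z = r y} le y (r y))"
    using Dii[rule_format, OF x(1)] by blast
  show ?thesis
  proof
    assume "wwup D le ?x \<noteq> {}"
    then have H: "\<forall>y\<in>D. l y = a \<and> le y ?x \<longrightarrow> way_below {z\<in>D. r z = r y} le y (r y)"
      using E x by simp
    show "wb a b" unfolding way_below_def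
    proof (intro conjI allI impI)
      show "a \<in> M" "b \<in> M" by fact+
      fix L s assume h: "directed M lo L \<and> is_sup M lo L s \<and> lo b s"
      have as: "lo a s" using lo_trans ab h by blast
      have y: "iv a s \<in> D" "l (iv a s) = a" "r (iv a s) = s" using iv[OF as] by auto
      have "le (iv a s) ?x" using iv_le_iff[OF as ab] h lo_refl[OF aM] by auto
      then have "way_below {z\<in>D. r z = s} le (iv a s) s" using H y by metis
      then show "\<exists>x\<in>L. lo a x" using W1a[OF as] h by blast
    qed
  next
    assume wab: "wb a b"
    have "\<forall>y\<in>D. l y = l ?x \<and> le y ?x \<longrightarrow> way_below {z\<in>D. r z = r y} le y (r y)"
    proof (intro ballI impI)
      fix y assume yD: "y \<in> D" and hy: "l y = l ?x \<and> le y ?x"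
      have bc: "lo b (r y)" using B7[of y ?x] yD x hy by auto
      have ly: "l y = a" using hy x by simp
      have yeq: "y = iv a (r y)" using iv_lr[OF yD] ly by simp
      have ac: "lo a (r y)" using lo_x[OF yD] ly by simp
      have cM: "r y \<in> M" using rD yD by blast
      have wac: "wb a (r y)" using wb_mono_right[OF POM wab bc cM] .
      have "\<forall>L. directed M lo L \<and> is_sup M lo L (r y) \<longrightarrow> (\<exists>x\<in>L. lo a x)"
        using wac lo_refl[OF cM] unfolding way_below_def by blast
      then have "way_below {z\<in>D. r z = r y} le (iv a (r y)) (r y)" using W1a[OF ac] by blast
      then show "way_below {z\<in>D. r z = r y} le y (r y)" using yeq by simp
    qed
    then show "wwup D le ?x \<noteq> {}" using E by blast
  qed
qed

lemma W2: assumes ab: "lo a b" shows "wwup D le (iv a b) \<noteq> {} \<longleftrightarrow> wbf a b"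
proof -
  let ?x = "iv a b"
  have x: "?x \<in> D" "l ?x = a" "r ?x = b" using iv[OF ab] by auto
  have aM: "a \<in> M" and bM: "b \<in> M" using lo_M[OF ab] by auto
  have E: "wwup D le ?x \<noteq> {} \<longleftrightarrow>
      (\<forall>y\<in>D. r y = r ?x \<and> le y ?x \<longrightarrow> way_below {z\<in>D. l z = l y} le y (l y))"
    using Dii[rule_format, OF x(1)] by blast
  show ?thesis
  proof
    assume "wwup D le ?x \<noteq> {}"
    then have H: "\<forall>y\<in>D. r y = b \<and> le y ?x \<longrightarrow> way_below {z\<in>D. l z = l y} le y (l y)"
      using E x by simp
    show "wbf a b" unfolding wbf_def
    proof (intro allI impI)
      fix S i assume h: "filtered M lo S \<and> is_inf M lo S i \<and> lo i a"
      have ib: "lo i b" using lo_trans ab h by blast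
      have y: "iv i b \<in> D" "l (iv i b) = i" "r (iv i b) = b" using iv[OF ib] by auto
      have "le (iv i b) ?x" using iv_le_iff[OF ib ab] h lo_refl[OF bM] by auto
      then have "way_below {z\<in>D. l z = i} le (iv i b) i" using H y by metis
      then show "\<exists>x\<in>S. lo x b" using W2a[OF ib] h by blast
    qed
  next
    assume wab: "wbf a b"
    have "\<forall>y\<in>D. r y = r ?x \<and> le y ?x \<longrightarrow> way_below {z\<in>D. l z = l y} le y (l y)"
    proof (intro ballI impI)
      fix y assume yD: "y \<in> D" and hy: "r y = r ?x \<and> le y ?x"
      have ca: "lo (l y) a" using B7[of y ?x] yD x hy by auto
      have ry: "r y = b" using hy x by simp
      have yeq: "y = iv (l y) b" using iv_lr[OF yD] ry by simp
      have cb: "lo (l y) b" using lo_x[OF yD] ry by simp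
      have "\<forall>R. filtered M lo R \<and> is_inf M lo R (l y) \<longrightarrow> (\<exists>x\<in>R. lo x b)"
        using wab ca unfolding wbf_def by blast
      then have "way_below {z\<in>D. l z = l y} le (iv (l y) b) (l y)" using W2a[OF cb] by blast
      then show "way_below {z\<in>D. l z = l y} le y (l y)" using yeq by simp
    qed
    then show "wwup D le ?x \<noteq> {}" using E by blast
  qed
qed

lemma wbf_lo: assumes "x \<in> M" "wbf x y" shows "lo x y"
proof -
  have "filtered M lo {x}" using assms lo_refl unfolding filtered_def by auto
  moreover have "is_inf M lo {x} x" using assms lo_refl unfolding is_inf_def by auto
  ultimately show ?thesis using assms lo_refl unfolding wbf_def by blast
qed

lemma bicont1: assumes "x \<in> M" "y \<in> M" shows "wb x y \<longleftrightarrow> wbf x y"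
proof
  assume h: "wb x y"
  then have xy: "lo x y" using wb_le[OF POM] by blast
  show "wbf x y" using W1[OF xy] W2[OF xy] h by simp
next
  assume h: "wbf x y"
  then have xy: "lo x y" using wbf_lo assms by blast
  show "wb x y" using W1[OF xy] W2[OF xy] h by simp
qed

end



context idom begin

lemma W3: assumes xD: "x \<in> D" and pM: "p \<in> M" and w: "way_below D le x p"
  shows "wb (l x) p \<and> wb p (r x)"
proof -
  have "le x p" using wb_le[OF PO w] .
  then have lp: "lo (l x) p" and pr: "lo p (r x)" using B5 xD pM by auto
  have pin: "p \<in> wwup D le x \<inter> M" using w pM M_sub unfolding wwup_def by blast
  have H: "(\<forall>z. is_inf D le {l x, p} z \<longrightarrow> wwup D le z \<noteq> {}) \<and>
           (\<forall>z. is_inf D le {p, r x} z \<longrightarrow> wwup D le z \<noteq> {})"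
    using Di[rule_format, OF xD pin] .
  have "is_inf D le {l x, p} (iv (l x) p)" using inf_lr[of "iv (l x) p"] iv[OF lp] by simp
  then have "wwup D le (iv (l x) p) \<noteq> {}" using H by blast
  then have 1: "wb (l x) p" using W1[OF lp] by blast
  have "is_inf D le {p, r x} (iv p (r x))" using inf_lr[of "iv p (r x)"] iv[OF pr] by simp
  then have "wwup D le (iv p (r x)) \<noteq> {}" using H by blast
  then have 2: "wb p (r x)" using W1[OF pr] by blast
  show ?thesis using 1 2 by blast
qed

lemma W4: assumes "wb a b" shows "\<exists>e. wb a e \<and> wb e b"
proof -
  have ab: "lo a b" using wb_le[OF POM assms] .
  have "wwup D le (iv a b) \<noteq> {}" using W1[OF ab] assms by simp
  then obtain y where y: "y \<in> D" "way_below D le (iv a b) y" unfolding wwup_def by blast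
  have ivD: "iv a b \<in> D" using iv[OF ab] by blast
  have "way_below D le (iv a b) (l y)" using wb_mono_right[OF PO y(2) le_l[OF y(1)]] lD[OF y(1)] M_sub by blast
  then have "wb (l (iv a b)) (l y) \<and> wb (l y) (r (iv a b))" using W3[OF ivD lD[OF y(1)]] by blast
  moreover have "l (iv a b) = a" "r (iv a b) = b" using iv[OF ab] by auto
  ultimately show ?thesis by metis
qed

end



context idom begin

lemma contD: assumes "x \<in> D" shows "\<exists>S. S \<subseteq> wwdown D le x \<and> directed D le S \<and> is_sup D le S x"
proof -
  have "continuous_poset D le" using CD unfolding continuous_dcpo_def by (rule conjunct1)
  then obtain B where "\<forall>x\<in>D. \<exists>S\<subseteq>B \<inter> wwdown D le x. directed D le S \<and> is_sup D le S x"
    unfolding continuous_poset_def by (elim conjE exE) blast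
  then obtain S where "S\<subseteq>B \<inter> wwdown D le x" "directed D le S" "is_sup D le S x" using assms by blast
  then show ?thesis by blast
qed

lemma approx: assumes zM: "z \<in> M"
  shows "\<exists>S. directed D le S \<and> is_sup D le S z \<and> (\<forall>s\<in>S. way_below D le s z) \<and>
     l ` S \<subseteq> wwdown M lo z \<and> directed M lo (l ` S) \<and> is_sup M lo (l ` S) z \<and>
     r ` S \<subseteq> wwup M lo z \<and> filtered M lo (r ` S) \<and> is_inf M lo (r ` S) z"
proof -
  obtain S where S: "S \<subseteq> wwdown D le z" "directed D le S" "is_sup D le S z" using contD zM M_sub by blast
  have SD: "S \<subseteq> D" using dirD[OF S(2)] .
  have wS: "\<forall>s\<in>S. way_below D le s z" using S(1) unfolding wwdown_def by blast
  have W: "\<forall>s\<in>S. wb (l s) z \<and> wb z (r s)"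
  proof
    fix s assume "s \<in> S"
    then show "wb (l s) z \<and> wb z (r s)" using W3[of s z] wS SD zM by blast
  qed
  have 1: "l ` S \<subseteq> wwdown M lo z" using W SD lD unfolding wwdown_def by blast
  have 2: "r ` S \<subseteq> wwup M lo z" using W SD rD unfolding wwup_def by blast
  have 3: "is_sup M lo (l ` S) z \<and> is_inf M lo (r ` S) z" using SUP[OF S(2,3)] l_max[OF zM] r_max[OF zM] by simp
  show ?thesis
    apply (rule exI[of _ S])
    using 1 2 3 S(2,3) wS dir_imgl[OF S(2)] filt_imgr[OF S(2)] by simp
qed

lemma bicont: "bicontinuous M lo"
  unfolding bicontinuous_def
proof (intro conjI ballI)
  show "continuous_poset M lo" unfolding continuous_poset_def
  proof (intro conjI exI[of _ M])
    show "poset M lo" by (rule POM)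
    show "M \<subseteq> M" by blast
    show "\<forall>x\<in>M. \<exists>S\<subseteq>M \<inter> wwdown M lo x. directed M lo S \<and> is_sup M lo S x"
    proof
      fix x assume "x \<in> M"
      then obtain S where S: "l ` S \<subseteq> wwdown M lo x" "directed M lo (l ` S)" "is_sup M lo (l ` S) x"
        using approx[OF \<open>x \<in> M\<close>] by (elim exE conjE) blast
      have "l ` S \<subseteq> M" using S(2) unfolding directed_def by blast
      then show "\<exists>S\<subseteq>M \<inter> wwdown M lo x. directed M lo S \<and> is_sup M lo S x" using S by blast
    qed
  qed
  fix x y assume x: "x \<in> M" and y: "y \<in> M"
  show "wb x y \<longleftrightarrow> (\<forall>S i. filtered M lo S \<and> is_inf M lo S i \<and> lo i x \<longrightarrow> (\<exists>s\<in>S. lo s y))"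
    using bicont1[OF x y] unfolding wbf_def .
next
  fix x assume x: "x \<in> M"
  obtain S where S: "r ` S \<subseteq> wwup M lo x" "filtered M lo (r ` S)" "is_inf M lo (r ` S) x"
    using approx[OF x] by (elim exE conjE) blast
  show "filtered M lo (wwup M lo x)" unfolding filtered_def
  proof (intro conjI ballI)
    show "wwup M lo x \<subseteq> M" unfolding wwup_def by blast
    show "wwup M lo x \<noteq> {}" using S unfolding filtered_def by blast
    fix a b assume a: "a \<in> wwup M lo x" and b: "b \<in> wwup M lo x"
    have aM: "a \<in> M" "wb x a" using a unfolding wwup_def by blast+
    have bM: "b \<in> M" "wb x b" using b unfolding wwup_def by blast+
    have "wbf x a" using bicont1[OF x aM(1)] aM(2) by simp
    moreover have "wbf x b" using bicont1[OF x bM(1)] bM(2) by simp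
    have fa: "\<exists>s\<in>r ` S. lo s a" using \<open>wbf x a\<close> S(2,3) lo_refl[OF x] unfolding wbf_def by blast
    have fb: "\<exists>s\<in>r ` S. lo s b" using \<open>wbf x b\<close> S(2,3) lo_refl[OF x] unfolding wbf_def by blast
    obtain s1 s2 where s: "s1 \<in> r ` S" "lo s1 a" "s2 \<in> r ` S" "lo s2 b" using fa fb by blast
    obtain s3 where s3: "s3 \<in> r ` S" "lo s3 s1" "lo s3 s2" using S(2) s(1,3) unfolding filtered_def by blast
    have "lo s3 a" "lo s3 b" using s s3 lo_trans by blast+
    then show "\<exists>c\<in>wwup M lo x. lo c a \<and> lo c b" using s3 S by blast
  qed
  show "is_inf M lo (wwup M lo x) x" unfolding is_inf_def
  proof (intro conjI ballI impI)
    show "x \<in> M" by fact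
    fix a assume "a \<in> wwup M lo x"
    then show "lo x a" using wb_le[OF POM] unfolding wwup_def by blast
  next
    fix u assume "u \<in> M" "\<forall>a\<in>wwup M lo x. lo u a"
    then show "lo u x" using S unfolding is_inf_def by blast
  qed
qed

end



lemma so_empty: "scott_open X le {}" unfolding scott_open_def by blast

lemma so_Int: assumes U: "scott_open X le U" and V: "scott_open X le V" shows "scott_open X le (U \<inter> V)"
  unfolding scott_open_def
proof (intro conjI ballI allI impI)
  show "U \<inter> V \<subseteq> X" using U unfolding scott_open_def by blast
  fix x y assume "x \<in> U \<inter> V" "y \<in> X" "le x y"
  then show "y \<in> U \<inter> V" using U V unfolding scott_open_def by blast
next
  fix S s assume h: "directed X le S \<and> is_sup X le S s \<and> s \<in> U \<inter> V"
  obtain a where a: "a \<in> S" "a \<in> U" using h U unfolding scott_open_def by blast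
  obtain b where b: "b \<in> S" "b \<in> V" using h V unfolding scott_open_def by blast
  obtain c where c: "c \<in> S" "le a c" "le b c" using h a b unfolding directed_def by blast
  have cX: "c \<in> X" using h c unfolding directed_def by blast
  have "c \<in> U" using U a c cX unfolding scott_open_def by blast
  moreover have "c \<in> V" using V b c cX unfolding scott_open_def by blast
  ultimately show "S \<inter> (U \<inter> V) \<noteq> {}" using c by blast
qed

lemma so_Union: assumes A: "\<forall>U\<in>K. scott_open X le U" shows "scott_open X le (\<Union>K)"
  unfolding scott_open_def
proof (intro conjI ballI allI impI)
  show "\<Union>K \<subseteq> X" using A unfolding scott_open_def by blast
  fix x y assume x: "x \<in> \<Union>K" and y: "y \<in> X" "le x y"
  then obtain U where U: "U \<in> K" "x \<in> U" by blast
  then have "y \<in> U" using A y unfolding scott_open_def by blast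
  then show "y \<in> \<Union>K" using U by blast
next
  fix S s assume h: "directed X le S \<and> is_sup X le S s \<and> s \<in> \<Union>K"
  then obtain U where U: "U \<in> K" "s \<in> U" by blast
  then have "S \<inter> U \<noteq> {}" using A h unfolding scott_open_def by blast
  then show "S \<inter> \<Union>K \<noteq> {}" using U by blast
qed

context idom begin

abbreviation gens where "gens \<equiv> {wwup M lo a \<inter> wwdown M lo b | a b. a \<in> M \<and> b \<in> M}"

lemma IT: "interval_topology M lo = topology_generated_by gens" unfolding interval_topology_def ..

lemma topspace_IT: "topspace (interval_topology M lo) = M"
proof -
  have "\<Union>gens = M"
  proof
    show "\<Union>gens \<subseteq> M" unfolding wwup_def by blast
    show "M \<subseteq> \<Union>gens"
    proof
      fix z assume z: "z \<in> M"
      obtain S where S: "l ` S \<subseteq> wwdown M lo z" "r ` S \<subseteq> wwup M lo z" "directed D le S"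
        using approx[OF z] by (elim exE conjE) blast
      obtain s where s: "s \<in> S" using S(3) unfolding directed_def by blast
      have "l s \<in> M" "r s \<in> M" "z \<in> wwup M lo (l s)" "z \<in> wwdown M lo (r s)"
        using S s z unfolding wwup_def wwdown_def by blast+
      then show "z \<in> \<Union>gens" by blast
    qed
  qed
  then show ?thesis unfolding IT by simp
qed

definition bas where "bas c d = {y\<in>D. wb c (l y) \<and> wb (r y) d}"

lemma bas_M: assumes "c \<in> M" "d \<in> M" shows "bas c d \<inter> M = wwup M lo c \<inter> wwdown M lo d"
proof
  show "bas c d \<inter> M \<subseteq> wwup M lo c \<inter> wwdown M lo d"
  proof
    fix y assume y: "y \<in> bas c d \<inter> M"
    then have "l y = y" "r y = y" "y \<in> M" using l_max r_max by blast+
    then show "y \<in> wwup M lo c \<inter> wwdown M lo d" using y unfolding bas_def wwup_def wwdown_def by simp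
  qed
  show "wwup M lo c \<inter> wwdown M lo d \<subseteq> bas c d \<inter> M"
  proof
    fix y assume y: "y \<in> wwup M lo c \<inter> wwdown M lo d"
    then have yM: "y \<in> M" unfolding wwup_def by blast
    then have "l y = y" "r y = y" "y \<in> D" using l_max r_max M_sub by blast+
    then show "y \<in> bas c d \<inter> M" using y yM unfolding bas_def wwup_def wwdown_def by simp
  qed
qed

end



context idom begin

lemma bas_open: assumes cM: "c \<in> M" and dM: "d \<in> M" shows "scott_open D le (bas c d)"
  unfolding scott_open_def
proof (intro conjI ballI allI impI)
  show "bas c d \<subseteq> D" unfolding bas_def by blast
  fix y y' assume y: "y \<in> bas c d" and y': "y' \<in> D" "le y y'"
  have yD: "y \<in> D" using y unfolding bas_def by blast
  have "lo (l y) (l y')" "lo (r y') (r y)" using B7[OF yD y'(1)] y'(2) by auto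
  moreover have "wb c (l y)" "wb (r y) d" using y unfolding bas_def by auto
  ultimately have "wb c (l y')" "wb (r y') d"
    using wb_mono_right[OF POM, of c "l y" "l y'"] wb_mono_left[OF POM, of "r y" d "r y'"] lD[OF y'(1)] rD[OF y'(1)]
    by blast+
  then show "y' \<in> bas c d" using y' unfolding bas_def by blast
next
  fix S s assume h: "directed D le S \<and> is_sup D le S s \<and> s \<in> bas c d"
  have dS: "directed D le S" and sS: "is_sup D le S s" using h by auto
  have SD: "S \<subseteq> D" using dirD[OF dS] .
  have sD: "s \<in> D" using supD[OF sS] .
  have w1: "wb c (l s)" and w2: "wb (r s) d" using h unfolding bas_def by auto
  have SU: "is_sup M lo (l ` S) (l s)" and IN: "is_inf M lo (r ` S) (r s)" using SUP[OF dS sS] by auto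
  obtain e where e: "wb c e" "wb e (l s)" using W4[OF w1] by blast
  have "\<exists>x\<in>l ` S. lo e x" using e(2) dir_imgl[OF dS] SU lo_refl[OF lD[OF sD]] unfolding way_below_def by blast
  then obtain s1 where s1: "s1 \<in> S" "lo e (l s1)" by blast
  have ws1: "wb c (l s1)" using wb_mono_right[OF POM e(1) s1(2)] lD s1 SD by blast
  obtain e' where e': "wb (r s) e'" "wb e' d" using W4[OF w2] by blast
  have e'M: "e' \<in> M" using e'(2) unfolding way_below_def by blast
  have "wbf (r s) e'" using bicont1[OF rD[OF sD] e'M] e'(1) by simp
  then have "\<exists>y\<in>r ` S. lo y e'" using filt_imgr[OF dS] IN lo_refl[OF rD[OF sD]] unfolding wbf_def by blast
  then obtain s2 where s2: "s2 \<in> S" "lo (r s2) e'" by blast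
  have ws2: "wb (r s2) d" using wb_mono_left[OF POM e'(2) s2(2)] rD s2 SD by blast
  obtain s3 where s3: "s3 \<in> S" "le s1 s3" "le s2 s3" using dS s1 s2 unfolding directed_def by blast
  have "lo (l s1) (l s3)" using B7[of s1 s3] s1 s3 SD by blast
  then have "wb c (l s3)" using wb_mono_right[OF POM ws1] lD s3 SD by blast
  moreover have "lo (r s3) (r s2)" using B7[of s2 s3] s2 s3 SD by blast
  then have "wb (r s3) d" using wb_mono_left[OF POM ws2] rD s3 SD by blast
  ultimately have "s3 \<in> bas c d" using s3 SD unfolding bas_def by blast
  then show "S \<inter> bas c d \<noteq> {}" using s3 by blast
qed

lemma T2: "generate_topology_on gens Q \<Longrightarrow> \<exists>V. scott_open D le V \<and> V \<inter> M = Q \<inter> M"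
proof (induction rule: generate_topology_on.induct)
  case Empty
  then show ?case using so_empty by blast
next
  case (Int a b)
  then obtain Va Vb where "scott_open D le Va" "Va \<inter> M = a \<inter> M" "scott_open D le Vb" "Vb \<inter> M = b \<inter> M" by blast
  then have "scott_open D le (Va \<inter> Vb)" "(Va \<inter> Vb) \<inter> M = (a \<inter> b) \<inter> M"
    using so_Int[of D le Va Vb] by blast+
  then show ?case by blast
next
  case (UN K)
  then have "\<forall>k\<in>K. \<exists>V. scott_open D le V \<and> V \<inter> M = k \<inter> M" by blast
  then obtain g where g: "\<forall>k\<in>K. scott_open D le (g k) \<and> g k \<inter> M = k \<inter> M" by (rule bchoice[elim_format]) blast
  have "\<forall>V\<in>g ` K. scott_open D le V" using g by blast
  then have "scott_open D le (\<Union>(g ` K))" by (rule so_Union)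
  moreover have "\<Union>(g ` K) \<inter> M = \<Union>K \<inter> M"
  proof
    show "\<Union>(g ` K) \<inter> M \<subseteq> \<Union>K \<inter> M"
    proof
      fix x assume "x \<in> \<Union>(g ` K) \<inter> M"
      then obtain k where k: "k \<in> K" "x \<in> g k" "x \<in> M" by blast
      then have "x \<in> g k \<inter> M" by blast
      then have "x \<in> k \<inter> M" using g k(1) by simp
      then show "x \<in> \<Union>K \<inter> M" using k(1) by blast
    qed
    show "\<Union>K \<inter> M \<subseteq> \<Union>(g ` K) \<inter> M"
    proof
      fix x assume "x \<in> \<Union>K \<inter> M"
      then obtain k where k: "k \<in> K" "x \<in> k" "x \<in> M" by blast
      then have "x \<in> k \<inter> M" by blast
      then have "x \<in> g k \<inter> M" using g k(1) by simp
      then show "x \<in> \<Union>(g ` K) \<inter> M" using k(1) by blast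
    qed
  qed
  ultimately show ?case by blast
next
  case (Basis s)
  then obtain c d where cd: "c \<in> M" "d \<in> M" "s = wwup M lo c \<inter> wwdown M lo d" by blast
  have "s \<inter> M = s" using cd unfolding wwup_def by blast
  then have "bas c d \<inter> M = s \<inter> M" using bas_M[OF cd(1,2)] cd(3) by simp
  then show ?case using bas_open[OF cd(1,2)] by blast
qed

lemma T2': assumes "openin (interval_topology M lo) Q" shows "\<exists>V. scott_open D le V \<and> V \<inter> M = Q \<inter> M"
proof -
  have "generate_topology_on gens Q" using assms unfolding IT openin_topology_generated_by_iff .
  then show ?thesis by (rule T2)
qed

lemma T1: assumes U: "scott_open D le U" shows "openin (interval_topology M lo) (U \<inter> M)"
proof -
  let ?K = "{G\<in>gens. G \<subseteq> U}"
  have "U \<inter> M = \<Union>?K"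
  proof
    show "U \<inter> M \<subseteq> \<Union>?K"
    proof
      fix z assume z: "z \<in> U \<inter> M"
      then have zM: "z \<in> M" by blast
      obtain S where S: "directed D le S" "is_sup D le S z" "\<forall>s\<in>S. way_below D le s z"
        using approx[OF zM] by (elim exE conjE) blast
      have SD: "S \<subseteq> D" using dirD[OF S(1)] .
      have "S \<inter> U \<noteq> {}" using U S z unfolding scott_open_def by blast
      then obtain s where s: "s \<in> S" "s \<in> U" by blast
      have sD: "s \<in> D" using s SD by blast
      have W: "wb (l s) z \<and> wb z (r s)" using W3[OF sD zM] S s by blast
      let ?G = "wwup M lo (l s) \<inter> wwdown M lo (r s)"
      have G: "?G \<in> gens" using lD[OF sD] rD[OF sD] by blast
      have zG: "z \<in> ?G" using W zM unfolding wwup_def wwdown_def by blast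
      have "?G \<subseteq> U"
      proof
        fix w assume w: "w \<in> ?G"
        then have wM: "w \<in> M" unfolding wwup_def by blast
        have "lo (l s) w" "lo w (r s)" using w wb_le[OF POM] unfolding wwup_def wwdown_def by blast+
        then have "le s w" using le_M[OF sD wM] by blast
        then show "w \<in> U" using U s wM M_sub unfolding scott_open_def by blast
      qed
      then show "z \<in> \<Union>?K" using G zG by blast
    qed
    show "\<Union>?K \<subseteq> U \<inter> M" unfolding wwup_def by blast
  qed
  moreover have "openin (interval_topology M lo) (\<Union>?K)"
    unfolding IT openin_topology_generated_by_iff
    apply (rule generate_topology_on.UN)
    apply (rule generate_topology_on.Basis)
    by blast
  ultimately show ?thesis by simp
qed

end



context idom begin

lemma compact_iv: assumes aM: "a \<in> M" and bM: "b \<in> M"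
  shows "compactin (interval_topology M lo) {z\<in>M. lo a z \<and> lo z b}"
proof (cases "lo a b")
  case False
  then have E: "{z\<in>M. lo a z \<and> lo z b} = {}" using lo_trans by blast
  show ?thesis unfolding E by (rule compactin_empty)
next
  case True
  let ?x = "iv a b"
  let ?K = "{z\<in>M. lo a z \<and> lo z b}"
  have xD: "?x \<in> D" using iv[OF True] by blast
  have K: "?K = {y\<in>M. le ?x y}" using iv_le_M[OF True] by blast
  have SC: "scott_compact D le {y\<in>M. le ?x y}" using Div xD by blast
  show ?thesis unfolding compactin_def
  proof (intro conjI allI impI)
    show "?K \<subseteq> topspace (interval_topology M lo)" using topspace_IT by blast
    fix \<U> assume h: "(\<forall>U\<in>\<U>. openin (interval_topology M lo) U) \<and> ?K \<subseteq> \<Union>\<U>"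
    then have "\<forall>U\<in>\<U>. \<exists>V. scott_open D le V \<and> V \<inter> M = U \<inter> M" using T2' by blast
    then obtain g where g: "\<forall>U\<in>\<U>. scott_open D le (g U) \<and> g U \<inter> M = U \<inter> M"
      by (rule bchoice[elim_format]) blast
    have "\<forall>V\<in>g ` \<U>. scott_open D le V" using g by blast
    moreover have "{y\<in>M. le ?x y} \<subseteq> \<Union>(g ` \<U>)"
    proof
      fix y assume "y \<in> {y\<in>M. le ?x y}"
      then have y: "y \<in> ?K" "y \<in> M" using K by auto
      then obtain U where U: "U \<in> \<U>" "y \<in> U" using h by blast
      then have "y \<in> g U \<inter> M" using g y(2) by blast
      then show "y \<in> \<Union>(g ` \<U>)" using U(1) by blast
    qed
    ultimately obtain \<F> where F: "\<F> \<subseteq> g ` \<U>" "finite \<F>" "{y\<in>M. le ?x y} \<subseteq> \<Union>\<F>"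
      using SC unfolding scott_compact_def by blast
    obtain \<G> where G: "\<G> \<subseteq> \<U>" "finite \<G>" "\<F> = g ` \<G>" using finite_subset_image[OF F(2,1)] by blast
    have "?K \<subseteq> \<Union>\<G>"
    proof
      fix y assume "y \<in> ?K"
      then have y: "y \<in> {y\<in>M. le ?x y}" "y \<in> M" using K by auto
      then obtain V where V: "V \<in> \<F>" "y \<in> V" using F(3) by blast
      then obtain U where U: "U \<in> \<G>" "V = g U" using G(3) by blast
      then have "y \<in> g U \<inter> M" using V y(2) by blast
      then have "y \<in> U" using g U(1) G(1) by blast
      then show "y \<in> \<Union>\<G>" using U(1) by blast
    qed
    then show "\<exists>\<F>. finite \<F> \<and> \<F> \<subseteq> \<U> \<and> ?K \<subseteq> \<Union>\<F>" using G by blast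
  qed
qed

lemma GH: "globally_hyperbolic M lo"
  unfolding globally_hyperbolic_def using bicont compact_iv by blast

end



lemma IN_max: assumes A: "interval_domain D le l r" and B: "interval_domain E le' l' r'"
  and F: "IN_arrow D le l r E le' l' r' f" and p: "p \<in> maxset D le"
  shows "f p \<in> maxset E le'"
proof -
  interpret A: idom D le l r using A by unfold_locales
  interpret B: idom E le' l' r' using B by unfold_locales
  have pD: "p \<in> D" using p A.M_sub by blast
  have fE: "f p \<in> E" using F pD unfolding IN_arrow_def scott_continuous_def by blast
  have "f (l p) = l' (f p)" using F pD unfolding IN_arrow_def by blast
  then have "f p = l' (f p)" using A.l_max[OF p] by simp
  then show ?thesis using B.lD[OF fE] by simp
qed

lemma arrow: assumes A: "interval_domain D le l r" and B: "interval_domain E le' l' r'"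
  and F: "IN_arrow D le l r E le' l' r' f"
  shows "G_arrow (maxset D le) (max_order D l r) (maxset E le') (max_order E l' r') (max_map D le f)"
proof -
  interpret A: idom D le l r using A by unfold_locales
  interpret B: idom E le' l' r' using B by unfold_locales
  have fDE: "\<And>x. x \<in> D \<Longrightarrow> f x \<in> E" using F unfolding IN_arrow_def scott_continuous_def by blast
  have sc: "\<And>S s. directed D le S \<Longrightarrow> is_sup D le S s \<Longrightarrow> is_sup E le' (f ` S) (f s)"
    using F unfolding IN_arrow_def scott_continuous_def by blast
  have lr: "\<And>x. x \<in> D \<Longrightarrow> f (l x) = l' (f x) \<and> f (r x) = r' (f x)"
    using F unfolding IN_arrow_def by blast
  have fM: "\<And>p. p \<in> maxset D le \<Longrightarrow> f p \<in> maxset E le'" using IN_max[OF A B F] by blast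
  have mono: "le' (f x) (f y)" if xy: "x \<in> D" "y \<in> D" "le x y" for x y
  proof -
    have "directed D le {x, y}" using xy poset_refl[OF A.PO] unfolding directed_def by auto
    moreover have "is_sup D le {x, y} y" using xy poset_refl[OF A.PO] unfolding is_sup_def by auto
    ultimately have "is_sup E le' (f ` {x, y}) (f y)" by (rule sc)
    then show ?thesis unfolding is_sup_def by simp
  qed
  let ?g = "max_map D le f"
  have g: "\<And>x. x \<in> maxset D le \<Longrightarrow> ?g x = f x" unfolding max_map_def by simp
  show ?thesis unfolding G_arrow_def
  proof (intro conjI ballI impI)
    show "?g \<in> maxset D le \<rightarrow> maxset E le'" using fM g by simp
  next
    fix x y assume x: "x \<in> maxset D le" and y: "y \<in> maxset D le" and xy: "max_order D l r x y"
    then obtain z where z: "z \<in> D" "l z = x" "r z = y" unfolding max_order_def by blast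
    have "f z \<in> E" "l' (f z) = f x" "r' (f z) = f y" using fDE[OF z(1)] lr[OF z(1)] z by auto
    then show "max_order E l' r' (?g x) (?g y)" using g x y unfolding max_order_def by auto
  next
    show "continuous_map (interval_topology (maxset D le) (max_order D l r))
        (interval_topology (maxset E le') (max_order E l' r')) ?g"
      unfolding continuous_map_def A.topspace_IT B.topspace_IT
    proof (intro conjI allI impI)
      show "?g \<in> maxset D le \<rightarrow> maxset E le'" using fM g by simp
      fix U assume U: "openin (interval_topology (maxset E le') (max_order E l' r')) U"
      obtain V where V: "scott_open E le' V" "V \<inter> maxset E le' = U \<inter> maxset E le'" using B.T2'[OF U] by blast
      let ?W = "{x\<in>D. f x \<in> V}"
      have W: "scott_open D le ?W" unfolding scott_open_def
      proof (intro conjI ballI allI impI)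
        show "?W \<subseteq> D" by blast
        fix x y assume x: "x \<in> ?W" and y: "y \<in> D" "le x y"
        have "le' (f x) (f y)" using mono x y by blast
        then have "f y \<in> V" using V(1) x fDE[OF y(1)] unfolding scott_open_def by blast
        then show "y \<in> ?W" using y by blast
      next
        fix S s assume h: "directed D le S \<and> is_sup D le S s \<and> s \<in> ?W"
        have SD: "S \<subseteq> D" using h unfolding directed_def by blast
        have "directed E le' (f ` S)" unfolding directed_def
        proof (intro conjI ballI)
          show "f ` S \<subseteq> E" using SD fDE by blast
          show "f ` S \<noteq> {}" using h unfolding directed_def by blast
          fix a b assume "a \<in> f ` S" "b \<in> f ` S"
          then obtain x y where xy: "x \<in> S" "y \<in> S" "a = f x" "b = f y" by blast
          then obtain z where z: "z \<in> S" "le x z" "le y z" using h unfolding directed_def by blast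
          have "le' a (f z)" "le' b (f z)" using mono z xy SD by blast+
          then show "\<exists>c\<in>f ` S. le' a c \<and> le' b c" using z by blast
        qed
        moreover have "is_sup E le' (f ` S) (f s)" using sc h by blast
        moreover have "f s \<in> V" using h by blast
        ultimately have "f ` S \<inter> V \<noteq> {}" using V(1) unfolding scott_open_def by blast
        then show "S \<inter> ?W \<noteq> {}" using SD by blast
      qed
      have "openin (interval_topology (maxset D le) (max_order D l r)) (?W \<inter> maxset D le)"
        using A.T1[OF W] .
      moreover have "{x \<in> maxset D le. ?g x \<in> U} = ?W \<inter> maxset D le"
      proof
        show "{x \<in> maxset D le. ?g x \<in> U} \<subseteq> ?W \<inter> maxset D le"
        proof
          fix x assume x: "x \<in> {x \<in> maxset D le. ?g x \<in> U}"
          then have xM: "x \<in> maxset D le" and fU: "f x \<in> U" using g by auto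
          have "f x \<in> U \<inter> maxset E le'" using fU fM[OF xM] by blast
          then have "f x \<in> V" using V(2) by blast
          then show "x \<in> ?W \<inter> maxset D le" using xM A.M_sub by blast
        qed
        show "?W \<inter> maxset D le \<subseteq> {x \<in> maxset D le. ?g x \<in> U}"
        proof
          fix x assume x: "x \<in> ?W \<inter> maxset D le"
          then have xM: "x \<in> maxset D le" and fV: "f x \<in> V" by auto
          have "f x \<in> V \<inter> maxset E le'" using fV fM[OF xM] by blast
          then have "f x \<in> U" using V(2) by blast
          then show "x \<in> {x \<in> maxset D le. ?g x \<in> U}" using xM g by simp
        qed
      qed
      ultimately show "openin (interval_topology (maxset D le) (max_order D l r))
          {x \<in> maxset D le. ?g x \<in> U}" by simp
    qed
  qed
qed

theorem mainTheorem15: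
  shows "(\<forall>(D::'a set) le l r. interval_domain D le l r \<longrightarrow>
            globally_hyperbolic (maxset D le) (max_order D l r))
       \<and> (\<forall>(D::'a set) le l r (E::'b set) le' l' r' f.
            interval_domain D le l r \<and> interval_domain E le' l' r' \<and> IN_arrow D le l r E le' l' r' f \<longrightarrow>
            G_arrow (maxset D le) (max_order D l r) (maxset E le') (max_order E l' r') (max_map D le f))
       \<and> (\<forall>(D::'a set) le l r. interval_domain D le l r \<longrightarrow>
            max_map D le (\<lambda>x. x) = restrict (\<lambda>x. x) (maxset D le))
       \<and> (\<forall>(D::'a set) le l r (E::'b set) le' l' r' (F::'c set) le'' l'' r'' f g.
            interval_domain D le l r \<and> interval_domain E le' l' r' \<and> interval_domain F le'' l'' r''
            \<and> IN_arrow D le l r E le' l' r' f \<and> IN_arrow E le' l' r' F le'' l'' r'' g \<longrightarrow>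
            max_map D le (g \<circ> f) = compose (maxset D le) (max_map E le' g) (max_map D le f))"
proof (intro conjI allI impI)
  fix D :: "'a set" and le l r assume "interval_domain D le l r"
  then interpret A: idom D le l r by unfold_locales
  show "globally_hyperbolic (maxset D le) (max_order D l r)" by (rule A.GH)
next
  fix D :: "'a set" and le l r and E :: "'b set" and le' l' r' f
  assume "interval_domain D le l r \<and> interval_domain E le' l' r' \<and> IN_arrow D le l r E le' l' r' f"
  then show "G_arrow (maxset D le) (max_order D l r) (maxset E le') (max_order E l' r') (max_map D le f)"
    using arrow by blast
next
  fix D :: "'a set" and le l r
  show "max_map D le (\<lambda>x. x) = restrict (\<lambda>x. x) (maxset D le)" unfolding max_map_def ..
next
  fix D :: "'a set" and le l r and E :: "'b set" and le' l' r' and F :: "'c set" and le'' l'' r'' f g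
  assume h: "interval_domain D le l r \<and> interval_domain E le' l' r' \<and> interval_domain F le'' l'' r''
            \<and> IN_arrow D le l r E le' l' r' f \<and> IN_arrow E le' l' r' F le'' l'' r'' g"
  have fM: "\<And>p. p \<in> maxset D le \<Longrightarrow> f p \<in> maxset E le'"
  proof -
    fix p assume p: "p \<in> maxset D le"
    have h1: "interval_domain D le l r" "interval_domain E le' l' r'" "IN_arrow D le l r E le' l' r' f"
      using h by auto
    show "f p \<in> maxset E le'" by (rule IN_max[OF h1 p])
  qed
  show "max_map D le (g \<circ> f) = compose (maxset D le) (max_map E le' g) (max_map D le f)"
  proof
    fix x show "max_map D le (g \<circ> f) x = compose (maxset D le) (max_map E le' g) (max_map D le f) x"
      using fM unfolding max_map_def compose_def by auto
  qed
qed



end
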